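(* Let $\alpha\in\mathbb R$. For every $u_0>0$ there exist $R>0$ and $u\in C^2([0,R])$ solving $$\left(\frac{r\,u'(r)}{\sqrt{1+u'(r)^2}}\right)'=\alpha\,\frac{r\,(u-ru')}{(r^2+u^2)\sqrt{1+u'^2}}\quad\text{in }(0,R),\qquad u(0)=u_0,\quad u'(0)=0.$$ Moreover, the solution depends continuously on the parameters $\alpha$ and $u_0$.
   Context: This ODE is the equation for the profile $z=u(r)$, $r=\sqrt{x^2+y^2}$, of a surface of revolution about the $z$-axis satisfying $H=\alpha\langle\nu,p\rangle/|p|^2$ (with $H$ the sum of principal curvatures), meeting the rotation axis orthogonally at $(0,0,u_0)$. *)

theory Defs
  imports "HOL-Analysis.Analysis"
begin

definition is_C2_on :: "real \<Rightarrow> (real \<Rightarrow> real) \<Rightarrow> (real \<Rightarrow> real) \<Rightarrow> (real \<Rightarrow> real) \<Rightarrow> bool" where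
  "is_C2_on R u u1 u2 \<longleftrightarrow>
     (\<forall>r\<in>{0..R}. (u has_real_derivative u1 r) (at r within {0..R})) \<and>
     (\<forall>r\<in>{0..R}. (u1 has_real_derivative u2 r) (at r within {0..R})) \<and>
     continuous_on {0..R} u2"

definition profile_solution ::
  "real \<Rightarrow> real \<Rightarrow> real \<Rightarrow> (real \<Rightarrow> real) \<Rightarrow> (real \<Rightarrow> real) \<Rightarrow> (real \<Rightarrow> real) \<Rightarrow> bool" where
  "profile_solution \<alpha> u0 R u u1 u2 \<longleftrightarrow>
     is_C2_on R u u1 u2 \<and>
     (\<forall>r\<in>{0<..<R}.
        ((\<lambda>s. s * u1 s / sqrt (1 + (u1 s)\<^sup>2)) has_real_derivative
           \<alpha> * (r * (u r - r * u1 r)) / ((r\<^sup>2 + (u r)\<^sup>2) * sqrt (1 + (u1 r)\<^sup>2))) (at r)) \<and>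
     u 0 = u0 \<and> u1 0 = 0"

end

theory Submission
  imports Defs
begin

definition cc :: real where "cc = 1/1000"
definition Lf :: "real \<Rightarrow> real" where "Lf a = cc / (1 + \<bar>a\<bar>)"
definition clamp :: "real \<Rightarrow> real" where "clamp t = max 0 (min 1 t)"
definition clw :: "real \<Rightarrow> real" where "clw x = max (-1/2) (min (1/2) x)"
definition clm :: "real \<Rightarrow> real" where "clm x = max (1/2) (min (3/2) x)"
definition Phi0 :: "real \<Rightarrow> real \<Rightarrow> real \<Rightarrow> real" where
  "Phi0 l W M = (M * sqrt (1 - W\<^sup>2) - l * W) / (l\<^sup>2 + M\<^sup>2)"
definition Phi :: "real \<Rightarrow> real \<Rightarrow> real \<Rightarrow> real \<Rightarrow> real" where
  "Phi a s h m = a * Lf a * Phi0 (Lf a * s) (clw (s * h)) (clm m)"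
definition Psi :: "real \<Rightarrow> real \<Rightarrow> real" where
  "Psi s h = clw (s * h) / sqrt (1 - (clw (s * h))\<^sup>2)"

lemma Lf_pos: "Lf a > 0" unfolding Lf_def cc_def by (intro divide_pos_pos) (auto intro: add_pos_nonneg)
lemma Lf_le: "Lf a \<le> cc" unfolding Lf_def using divide_left_mono[of 1 "1+\<bar>a\<bar>" cc] by (simp add: cc_def)
lemma aLf_le: "\<bar>a * Lf a\<bar> \<le> cc"
proof -
  have "\<bar>a * Lf a\<bar> = cc * (\<bar>a\<bar> / (1 + \<bar>a\<bar>))" by (simp add: Lf_def cc_def abs_mult)
  also have "\<dots> \<le> cc * 1" by (intro mult_left_mono) (auto simp: cc_def)
  finally show ?thesis by simp
qed

lemma clamp_id: "t \<in> {0..1} \<Longrightarrow> clamp t = t" by (auto simp: clamp_def)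
lemma clamp_range: "clamp t \<in> {0..1}" by (auto simp: clamp_def)
lemma clw_id: "\<bar>x\<bar> \<le> 1/2 \<Longrightarrow> clw x = x" by (auto simp: clw_def)
lemma clm_id: assumes "\<bar>x - 1\<bar> \<le> 1/2" shows "clm x = x"
proof -
  have "x \<ge> 1/2" "x \<le> 3/2" using assms by arith+
  then show ?thesis unfolding clm_def by simp
qed
lemma clw_bd: "\<bar>clw x\<bar> \<le> 1/2" by (auto simp: clw_def)
lemma clm_bd: "clm x \<ge> 1/2" "clm x \<le> 3/2" by (auto simp: clm_def)
lemma clw_lip: "\<bar>clw x - clw y\<bar> \<le> \<bar>x - y\<bar>" by (auto simp: clw_def)
lemma clm_lip: "\<bar>clm x - clm y\<bar> \<le> \<bar>x - y\<bar>" by (auto simp: clm_def)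

lemma sq4: assumes "\<bar>W::real\<bar> \<le> 1/2" shows "W\<^sup>2 \<le> 1/4"
proof -
  have "\<bar>W\<bar>\<^sup>2 \<le> (1/2)\<^sup>2" using assms by (intro power_mono) auto
  then show ?thesis by (simp add: power2_eq_square)
qed

lemma sq_bd: assumes "\<bar>W\<bar> \<le> 1/2" shows "sqrt (1 - W\<^sup>2) \<ge> 1/2" "sqrt (1 - W\<^sup>2) \<le> 1"
proof -
  have "(1/2)\<^sup>2 \<le> 1 - W\<^sup>2" using sq4[OF assms] by (simp add: power2_eq_square)
  then show "sqrt (1 - W\<^sup>2) \<ge> 1/2" using real_le_rsqrt by blast
  show "sqrt (1 - W\<^sup>2) \<le> 1" by simp
qed

lemma sq_sq: assumes "\<bar>W\<bar> \<le> 1/2" shows "(sqrt (1 - W\<^sup>2))\<^sup>2 = 1 - W\<^sup>2"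
  using sq4[OF assms] by (intro real_sqrt_pow2) linarith

lemma sq_lip: assumes "\<bar>a\<bar> \<le> 1/2" "\<bar>b\<bar> \<le> 1/2"
  shows "\<bar>sqrt (1 - a\<^sup>2) - sqrt (1 - b\<^sup>2)\<bar> \<le> \<bar>a - b\<bar>"
proof -
  define x where "x = sqrt (1 - a\<^sup>2)"
  define y where "y = sqrt (1 - b\<^sup>2)"
  have x: "x \<ge> 1/2" and y: "y \<ge> 1/2" using sq_bd assms unfolding x_def y_def by auto
  have "x\<^sup>2 = 1 - a\<^sup>2" unfolding x_def using sq_sq assms by auto
  moreover have "y\<^sup>2 = 1 - b\<^sup>2" unfolding y_def using sq_sq assms by auto
  ultimately have e: "(x - y) * (x + y) = (b - a) * (b + a)" by (simp add: algebra_simps power2_eq_square)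
  have "\<bar>x - y\<bar> * (x + y) = \<bar>(x - y) * (x + y)\<bar>" using x y by (simp add: abs_mult)
  also have "\<dots> = \<bar>b - a\<bar> * \<bar>b + a\<bar>" using e by (simp add: abs_mult)
  also have "\<dots> \<le> \<bar>b - a\<bar> * 1" using assms by (intro mult_left_mono) auto
  finally have 1: "\<bar>x - y\<bar> * (x + y) \<le> \<bar>a - b\<bar>" by simp
  have "\<bar>x - y\<bar> * 1 \<le> \<bar>x - y\<bar> * (x + y)" using x y by (intro mult_left_mono) auto
  with 1 show ?thesis unfolding x_def y_def by simp
qed


lemma frac_lip:
  fixes N1 N2 D1 D2 :: real
  assumes "D1 \<ge> 1/4" "D2 \<ge> 1/4" "\<bar>N2\<bar> \<le> 2"
  shows "\<bar>N1/D1 - N2/D2\<bar> \<le> 4 * \<bar>N1 - N2\<bar> + 32 * \<bar>D1 - D2\<bar>"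
proof -
  have e: "N1/D1 - N2/D2 = (N1 - N2)/D1 + N2 * (D2 - D1) / (D1 * D2)"
    using assms by (simp add: field_simps)
  have "\<bar>(N1 - N2)/D1\<bar> = \<bar>N1 - N2\<bar>/D1" using assms by simp
  also have "\<dots> \<le> \<bar>N1 - N2\<bar>/(1/4)" using assms by (intro divide_left_mono) auto
  finally have 1: "\<bar>(N1 - N2)/D1\<bar> \<le> 4 * \<bar>N1 - N2\<bar>" by simp
  have p: "D1 * D2 \<ge> 1/16" using assms mult_mono[of "1/4" D1 "1/4" D2] by simp
  have "\<bar>N2 * (D2 - D1)\<bar> = \<bar>N2\<bar> * \<bar>D1 - D2\<bar>" by (simp add: abs_mult abs_minus_commute)
  also have "\<dots> \<le> 2 * \<bar>D1 - D2\<bar>" using assms by (intro mult_right_mono) auto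
  finally have n: "\<bar>N2 * (D2 - D1)\<bar> \<le> 2 * \<bar>D1 - D2\<bar>" .
  have "\<bar>N2 * (D2 - D1) / (D1 * D2)\<bar> = \<bar>N2 * (D2 - D1)\<bar> / (D1 * D2)" using p by simp
  also have "\<dots> \<le> 2 * \<bar>D1 - D2\<bar> / (D1 * D2)" using n p by (intro divide_right_mono) auto
  also have "\<dots> \<le> 2 * \<bar>D1 - D2\<bar> / (1/16)" using p by (intro divide_left_mono) auto
  finally have 2: "\<bar>N2 * (D2 - D1) / (D1 * D2)\<bar> \<le> 32 * \<bar>D1 - D2\<bar>" by simp
  show ?thesis unfolding e using 1 2 abs_triangle_ineq[of "(N1 - N2)/D1" "N2 * (D2 - D1) / (D1 * D2)"] by linarith
qed

lemma Phi0_bd: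
  assumes "0 \<le> l" "l \<le> cc" "\<bar>W\<bar> \<le> 1/2" "1/2 \<le> M" "M \<le> 3/2"
  shows "\<bar>Phi0 l W M\<bar> \<le> 8" "\<bar>M * sqrt (1 - W\<^sup>2) - l * W\<bar> \<le> 2" "l\<^sup>2 + M\<^sup>2 \<ge> 1/4"
proof -
  have s: "1/2 \<le> sqrt (1 - W\<^sup>2)" "sqrt (1 - W\<^sup>2) \<le> 1" using sq_bd[OF assms(3)] by auto
  have "0 \<le> M * sqrt (1 - W\<^sup>2)" by (rule mult_nonneg_nonneg) (use s assms in linarith)+
  moreover have "M * sqrt (1 - W\<^sup>2) \<le> 3/2 * 1" by (rule mult_mono) (use s assms in linarith)+
  ultimately have "\<bar>M * sqrt (1 - W\<^sup>2)\<bar> \<le> 3/2" by simp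
  moreover have "\<bar>l * W\<bar> \<le> 1/2"
  proof -
    have "\<bar>l * W\<bar> = l * \<bar>W\<bar>" using assms by (simp add: abs_mult)
    also have "\<dots> \<le> 1 * (1/2)" using assms by (intro mult_mono) (auto simp: cc_def)
    finally show ?thesis by simp
  qed
  ultimately show N: "\<bar>M * sqrt (1 - W\<^sup>2) - l * W\<bar> \<le> 2" by linarith
  have "M\<^sup>2 \<ge> (1/2)\<^sup>2" using assms by (intro power_mono) auto
  then have "1/4 \<le> M\<^sup>2" by (simp add: power2_eq_square)
  then show D: "l\<^sup>2 + M\<^sup>2 \<ge> 1/4" using zero_le_power2[of l] by linarith
  have "\<bar>Phi0 l W M\<bar> = \<bar>M * sqrt (1 - W\<^sup>2) - l * W\<bar> / (l\<^sup>2 + M\<^sup>2)" using D by (simp add: Phi0_def)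
  also have "\<dots> \<le> 2 / (l\<^sup>2 + M\<^sup>2)" using N D by (intro divide_right_mono) auto
  also have "\<dots> \<le> 2 / (1/4)" using D by (intro divide_left_mono) auto
  also have "\<dots> = 8" by simp
  finally show "\<bar>Phi0 l W M\<bar> \<le> 8" .
qed

lemma Phi0_lip:
  assumes "0 \<le> l" "l \<le> cc" "\<bar>W1\<bar> \<le> 1/2" "1/2 \<le> M1" "M1 \<le> 3/2"
     "\<bar>W2\<bar> \<le> 1/2" "1/2 \<le> M2" "M2 \<le> 3/2"
  shows "\<bar>Phi0 l W1 M1 - Phi0 l W2 M2\<bar> \<le> 100 * (\<bar>W1 - W2\<bar> + \<bar>M1 - M2\<bar>)"
proof -
  define s1 where "s1 = sqrt (1 - W1\<^sup>2)"
  define s2 where "s2 = sqrt (1 - W2\<^sup>2)"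
  have s1: "1/2 \<le> s1" "s1 \<le> 1" using sq_bd[OF assms(3)] unfolding s1_def by auto
  have s2: "1/2 \<le> s2" "s2 \<le> 1" using sq_bd[OF assms(6)] unfolding s2_def by auto
  have ds: "\<bar>s1 - s2\<bar> \<le> \<bar>W1 - W2\<bar>" unfolding s1_def s2_def by (rule sq_lip[OF assms(3) assms(6)])
  have "M1 * s1 - l * W1 - (M2 * s2 - l * W2) = (M1 - M2) * s1 + M2 * (s1 - s2) - l * (W1 - W2)"
    by (simp add: algebra_simps)
  then have "\<bar>M1 * s1 - l * W1 - (M2 * s2 - l * W2)\<bar> \<le> \<bar>M1 - M2\<bar> * s1 + M2 * \<bar>s1 - s2\<bar> + l * \<bar>W1 - W2\<bar>"
  proof -
    have a: "\<bar>(M1 - M2) * s1\<bar> = \<bar>M1 - M2\<bar> * s1" using s1 by (simp add: abs_mult)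
    have b: "\<bar>M2 * (s1 - s2)\<bar> = M2 * \<bar>s1 - s2\<bar>" using assms by (simp add: abs_mult)
    have c: "\<bar>l * (W1 - W2)\<bar> = l * \<bar>W1 - W2\<bar>" using assms by (simp add: abs_mult)
    have "\<bar>(M1 - M2) * s1 + M2 * (s1 - s2) - l * (W1 - W2)\<bar> \<le> \<bar>(M1 - M2) * s1\<bar> + \<bar>M2 * (s1 - s2)\<bar> + \<bar>l * (W1 - W2)\<bar>"
      by linarith
    then show ?thesis using a b c \<open>M1 * s1 - l * W1 - (M2 * s2 - l * W2) = _\<close> by simp
  qed
  also have "\<dots> \<le> \<bar>M1 - M2\<bar> * 1 + 3/2 * \<bar>W1 - W2\<bar> + 1 * \<bar>W1 - W2\<bar>"
  proof -
    have "\<bar>M1 - M2\<bar> * s1 \<le> \<bar>M1 - M2\<bar> * 1" using s1 by (intro mult_left_mono) auto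
    moreover have "M2 * \<bar>s1 - s2\<bar> \<le> 3/2 * \<bar>W1 - W2\<bar>" using assms ds by (intro mult_mono) auto
    moreover have "l * \<bar>W1 - W2\<bar> \<le> 1 * \<bar>W1 - W2\<bar>" using assms by (intro mult_right_mono) (auto simp: cc_def)
    ultimately show ?thesis by linarith
  qed
  finally have dN: "\<bar>M1 * s1 - l * W1 - (M2 * s2 - l * W2)\<bar> \<le> \<bar>M1 - M2\<bar> + 5/2 * \<bar>W1 - W2\<bar>" by simp
  have "\<bar>(l\<^sup>2 + M1\<^sup>2) - (l\<^sup>2 + M2\<^sup>2)\<bar> = \<bar>M1 - M2\<bar> * \<bar>M1 + M2\<bar>"
  proof -
    have "(l\<^sup>2 + M1\<^sup>2) - (l\<^sup>2 + M2\<^sup>2) = (M1 - M2) * (M1 + M2)" by (simp add: power2_eq_square algebra_simps)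
    then show ?thesis by (simp add: abs_mult)
  qed
  also have "\<dots> \<le> \<bar>M1 - M2\<bar> * 3" using assms by (intro mult_left_mono) auto
  finally have dD: "\<bar>(l\<^sup>2 + M1\<^sup>2) - (l\<^sup>2 + M2\<^sup>2)\<bar> \<le> 3 * \<bar>M1 - M2\<bar>" by simp
  have b1: "l\<^sup>2 + M1\<^sup>2 \<ge> 1/4" and b2: "l\<^sup>2 + M2\<^sup>2 \<ge> 1/4" and n2: "\<bar>M2 * s2 - l * W2\<bar> \<le> 2"
    using Phi0_bd[OF assms(1,2,3,4,5)] Phi0_bd[OF assms(1,2,6,7,8)] unfolding s2_def by auto
  have "\<bar>Phi0 l W1 M1 - Phi0 l W2 M2\<bar> \<le> 4 * \<bar>M1 * s1 - l * W1 - (M2 * s2 - l * W2)\<bar> + 32 * \<bar>(l\<^sup>2 + M1\<^sup>2) - (l\<^sup>2 + M2\<^sup>2)\<bar>"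
    unfolding Phi0_def s1_def[symmetric] s2_def[symmetric] by (rule frac_lip[OF b1 b2 n2])
  also have "\<dots> \<le> 4 * (\<bar>M1 - M2\<bar> + 5/2 * \<bar>W1 - W2\<bar>) + 32 * (3 * \<bar>M1 - M2\<bar>)"
    using dN dD by (intro add_mono mult_left_mono) auto
  also have "\<dots> = 10 * \<bar>W1 - W2\<bar> + 100 * \<bar>M1 - M2\<bar>" by (simp add: algebra_simps)
  also have "\<dots> \<le> 100 * \<bar>W1 - W2\<bar> + 100 * \<bar>M1 - M2\<bar>" by simp
  finally show ?thesis by (simp add: algebra_simps)
qed

lemma Phi_bd: "0 \<le> s \<Longrightarrow> s \<le> 1 \<Longrightarrow> \<bar>Phi a s h m\<bar> \<le> 8 * cc"
proof -
  assume s: "0 \<le> s" "s \<le> 1"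
  have l: "0 \<le> Lf a * s" "Lf a * s \<le> cc" 
  proof -
    show "0 \<le> Lf a * s" using s Lf_pos[of a] by simp
    have "Lf a * s \<le> Lf a * 1" using s Lf_pos[of a] by (intro mult_left_mono) auto
    then show "Lf a * s \<le> cc" using Lf_le[of a] by simp
  qed
  have h: "\<bar>Phi0 (Lf a * s) (clw (s * h)) (clm m)\<bar> \<le> 8" by (rule Phi0_bd(1)[OF l(1) l(2) clw_bd clm_bd])
  show ?thesis
  proof -
    have "\<bar>a * Lf a * Phi0 (Lf a * s) (clw (s * h)) (clm m)\<bar> = \<bar>a * Lf a\<bar> * \<bar>Phi0 (Lf a * s) (clw (s * h)) (clm m)\<bar>"
      by (simp add: abs_mult)
    also have "\<dots> \<le> cc * 8" using h aLf_le[of a] by (intro mult_mono) auto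
    finally show ?thesis by (simp add: Phi_def mult.commute)
  qed
qed

lemma Phi_lip: "0 \<le> s \<Longrightarrow> s \<le> 1 \<Longrightarrow>
  \<bar>Phi a s h1 m1 - Phi a s h2 m2\<bar> \<le> 100 * cc * (\<bar>h1 - h2\<bar> + \<bar>m1 - m2\<bar>)"
proof -
  assume s: "0 \<le> s" "s \<le> 1"
  have l: "0 \<le> Lf a * s" "Lf a * s \<le> cc" 
  proof -
    show "0 \<le> Lf a * s" using s Lf_pos[of a] by simp
    have "Lf a * s \<le> Lf a * 1" using s Lf_pos[of a] by (intro mult_left_mono) auto
    then show "Lf a * s \<le> cc" using Lf_le[of a] by simp
  qed
  have "\<bar>clw (s * h1) - clw (s * h2)\<bar> \<le> \<bar>s * h1 - s * h2\<bar>" by (rule clw_lip)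
  also have "\<dots> = s * \<bar>h1 - h2\<bar>" using s by (simp add: abs_mult right_diff_distrib[symmetric])
  also have "\<dots> \<le> \<bar>h1 - h2\<bar>" using s by (simp add: mult_left_le_one_le)
  finally have dw: "\<bar>clw (s * h1) - clw (s * h2)\<bar> \<le> \<bar>h1 - h2\<bar>" .
  have "\<bar>Phi0 (Lf a * s) (clw (s * h1)) (clm m1) - Phi0 (Lf a * s) (clw (s * h2)) (clm m2)\<bar>
      \<le> 100 * (\<bar>clw (s * h1) - clw (s * h2)\<bar> + \<bar>clm m1 - clm m2\<bar>)"
    by (rule Phi0_lip[OF l clw_bd clm_bd clw_bd clm_bd])
  also have "\<dots> \<le> 100 * (\<bar>h1 - h2\<bar> + \<bar>m1 - m2\<bar>)" using dw clm_lip[of m1 m2] by simp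
  finally have *: "\<bar>Phi0 (Lf a * s) (clw (s * h1)) (clm m1) - Phi0 (Lf a * s) (clw (s * h2)) (clm m2)\<bar>
      \<le> 100 * (\<bar>h1 - h2\<bar> + \<bar>m1 - m2\<bar>)" .
  have "\<bar>Phi a s h1 m1 - Phi a s h2 m2\<bar> = \<bar>a * Lf a\<bar> *
      \<bar>Phi0 (Lf a * s) (clw (s * h1)) (clm m1) - Phi0 (Lf a * s) (clw (s * h2)) (clm m2)\<bar>"
    unfolding Phi_def by (simp add: abs_mult[symmetric] right_diff_distrib)
  also have "\<dots> \<le> cc * (100 * (\<bar>h1 - h2\<bar> + \<bar>m1 - m2\<bar>))"
    using aLf_le[of a] * by (intro mult_mono) auto
  finally show ?thesis by (simp add: algebra_simps)
qed

lemma div_half: fixes q c :: real assumes "1/2 \<le> q" "0 \<le> c" shows "c / q \<le> 2 * c"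
proof -
  have "c / q \<le> c / (1/2)" using assms by (intro divide_left_mono) auto
  then show ?thesis by simp
qed

lemma Psi_bd: "\<bar>Psi s h\<bar> \<le> 1"
proof -
  have w: "\<bar>clw (s*h)\<bar> \<le> 1/2" by (rule clw_bd)
  then have q: "sqrt (1 - (clw (s*h))\<^sup>2) \<ge> 1/2" by (rule sq_bd)
  have qa: "\<bar>sqrt (1 - (clw (s*h))\<^sup>2)\<bar> = sqrt (1 - (clw (s*h))\<^sup>2)" using q by (intro abs_of_nonneg) linarith
  have "\<bar>Psi s h\<bar> = \<bar>clw (s*h)\<bar> / sqrt (1 - (clw (s*h))\<^sup>2)" unfolding Psi_def abs_divide qa ..
  also have "\<dots> \<le> 2 * \<bar>clw (s*h)\<bar>" using q by (intro div_half) auto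
  also have "\<dots> \<le> 1" using w by simp
  finally show ?thesis .
qed

lemma Psi_lip: "0 \<le> s \<Longrightarrow> s \<le> 1 \<Longrightarrow> \<bar>Psi s h1 - Psi s h2\<bar> \<le> 4 * \<bar>h1 - h2\<bar>"
proof -
  assume s: "0 \<le> s" "s \<le> 1"
  define W1 where "W1 = clw (s * h1)"
  define W2 where "W2 = clw (s * h2)"
  have "\<bar>W1 - W2\<bar> \<le> \<bar>s * h1 - s * h2\<bar>" unfolding W1_def W2_def by (rule clw_lip)
  also have "\<dots> = s * \<bar>h1 - h2\<bar>" using s by (simp add: abs_mult right_diff_distrib[symmetric])
  also have "\<dots> \<le> \<bar>h1 - h2\<bar>" using s by (simp add: mult_left_le_one_le)
  finally have dw: "\<bar>W1 - W2\<bar> \<le> \<bar>h1 - h2\<bar>" .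
  have w1: "\<bar>W1\<bar> \<le> 1/2" and w2: "\<bar>W2\<bar> \<le> 1/2" unfolding W1_def W2_def by (rule clw_bd)+
  define s1 where "s1 = sqrt (1 - W1\<^sup>2)"
  define s2 where "s2 = sqrt (1 - W2\<^sup>2)"
  have s1: "1/2 \<le> s1" using sq_bd[OF w1] unfolding s1_def by auto
  have s2: "1/2 \<le> s2" using sq_bd[OF w2] unfolding s2_def by auto
  have ds: "\<bar>s1 - s2\<bar> \<le> \<bar>W1 - W2\<bar>" unfolding s1_def s2_def by (rule sq_lip[OF w1 w2])
  have e: "W1/s1 - W2/s2 = (W1 - W2)/s1 + W2 * (s2 - s1) / (s1 * s2)" using s1 s2 by (simp add: field_simps)
  have 1: "\<bar>(W1 - W2)/s1\<bar> \<le> 2 * \<bar>W1 - W2\<bar>" using s1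
  proof -
    have "\<bar>(W1 - W2)/s1\<bar> = \<bar>W1 - W2\<bar>/s1" using s1 by simp
    also have "\<dots> \<le> \<bar>W1 - W2\<bar>/(1/2)" using s1 by (intro divide_left_mono) auto
    finally show ?thesis by simp
  qed
  have p: "s1 * s2 \<ge> 1/4" using s1 s2 mult_mono[of "1/2" s1 "1/2" s2] by simp
  have "\<bar>W2 * (s2 - s1)\<bar> \<le> 1/2 * \<bar>W1 - W2\<bar>" using w2 ds
  proof -
    have "\<bar>W2 * (s2 - s1)\<bar> = \<bar>W2\<bar> * \<bar>s1 - s2\<bar>" by (simp add: abs_mult abs_minus_commute)
    also have "\<dots> \<le> 1/2 * \<bar>W1 - W2\<bar>" using w2 ds by (intro mult_mono) auto
    finally show ?thesis .
  qed
  also have "\<dots> = (2 * \<bar>W1 - W2\<bar>) * (1/4)" by simp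
  also have "\<dots> \<le> (2 * \<bar>W1 - W2\<bar>) * (s1 * s2)" using p by (intro mult_left_mono) auto
  finally have n: "\<bar>W2 * (s2 - s1)\<bar> \<le> (2 * \<bar>W1 - W2\<bar>) * (s1 * s2)" .
  have "\<bar>W2 * (s2 - s1) / (s1 * s2)\<bar> = \<bar>W2 * (s2 - s1)\<bar> / (s1 * s2)" using p by simp
  also have "\<dots> \<le> (2 * \<bar>W1 - W2\<bar>) * (s1 * s2) / (s1 * s2)" using n p by (intro divide_right_mono) auto
  also have "\<dots> = 2 * \<bar>W1 - W2\<bar>" using p by (subst nonzero_mult_div_cancel_right) auto
  finally have 2: "\<bar>W2 * (s2 - s1) / (s1 * s2)\<bar> \<le> 2 * \<bar>W1 - W2\<bar>" .
  have "\<bar>Psi s h1 - Psi s h2\<bar> = \<bar>W1/s1 - W2/s2\<bar>" unfolding Psi_def W1_def W2_def s1_def s2_def ..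
  also have "\<dots> \<le> 4 * \<bar>W1 - W2\<bar>" unfolding e using 1 2 abs_triangle_ineq[of "(W1 - W2)/s1" "W2 * (s2 - s1) / (s1 * s2)"] by linarith
  also have "\<dots> \<le> 4 * \<bar>h1 - h2\<bar>" using dw by simp
  finally show ?thesis .
qed


lemma cont_Lf[continuous_intros]: "continuous_on S A \<Longrightarrow> continuous_on S (\<lambda>x. Lf (A x))"
  unfolding Lf_def
  by (intro continuous_intros) (auto simp: add_pos_nonneg[of 1] intro: add_nonneg_nonneg)

lemma cont_clamp[continuous_intros]: "continuous_on S A \<Longrightarrow> continuous_on S (\<lambda>x. clamp (A x))"
  unfolding clamp_def by (intro continuous_intros)
lemma cont_clw[continuous_intros]: "continuous_on S A \<Longrightarrow> continuous_on S (\<lambda>x. clw (A x))"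
  unfolding clw_def by (intro continuous_intros)
lemma cont_clm[continuous_intros]: "continuous_on S A \<Longrightarrow> continuous_on S (\<lambda>x. clm (A x))"
  unfolding clm_def by (intro continuous_intros)

lemma sq_pos: "sqrt (1 - (clw x)\<^sup>2) \<noteq> 0"
  using sq_bd(1)[OF clw_bd[of x]] by linarith

lemma cont_Phi[continuous_intros]:
  assumes "continuous_on S A" "continuous_on S B" "continuous_on S C" "continuous_on S D"
  shows "continuous_on S (\<lambda>x. Phi (A x) (B x) (C x) (D x))"
proof -
  have "\<And>x. (Lf (A x) * B x)\<^sup>2 + (clm (D x))\<^sup>2 \<noteq> 0"
    using Phi0_bd(3)[OF _ _ clw_bd[of 0] clm_bd] by (metis clm_bd(1) add_nonneg_pos zero_le_power2 power2_eq_square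
       mult_pos_pos less_le_trans zero_less_divide_iff zero_less_one zero_less_numeral less_numeral_extra(3) order_less_irrefl)
  then show ?thesis unfolding Phi_def Phi0_def using assms by (intro continuous_intros) auto
qed

lemma cont_Psi[continuous_intros]:
  assumes "continuous_on S A" "continuous_on S B"
  shows "continuous_on S (\<lambda>x. Psi (A x) (B x))"
  unfolding Psi_def using assms sq_pos by (intro continuous_intros) auto


definition Top :: "(real \<times> real \<Rightarrow> real \<times> real) \<Rightarrow> real \<times> real \<Rightarrow> real \<times> real" where
  "Top f x = (integral {0..1} (\<lambda>t. t * Phi (fst x) (clamp (snd x) * t) (fst (f (fst x, clamp (snd x) * t))) (snd (f (fst x, clamp (snd x) * t)))),
              1 + integral {0..1} (\<lambda>t. clamp (snd x) * Lf (fst x) * Psi (clamp (snd x) * t) (fst (f (fst x, clamp (snd x) * t)))))"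

lemma cont_UNIV_comp: "continuous_on UNIV f \<Longrightarrow> continuous_on S A \<Longrightarrow> continuous_on S (\<lambda>y. f (A y))"
  by (rule continuous_on_compose2[of UNIV f S A]) auto

lemma int_bd:
  fixes g :: "real \<Rightarrow> real"
  assumes "continuous_on {0..1} g" "\<And>t. t \<in> {0..1} \<Longrightarrow> \<bar>g t\<bar> \<le> B"
  shows "\<bar>integral {0..1} g\<bar> \<le> B"
proof -
  have B: "0 \<le> B" using assms(2)[of 0] by auto
  have "(g has_integral integral {0..1} g) (cbox 0 1)"
    using integrable_continuous_interval[OF assms(1)] by (simp add: has_integral_integral)
  from has_integral_bound[OF B this] assms(2) show ?thesis by auto
qed

lemma Top_cont:
  assumes f: "continuous_on UNIV f"
  shows "continuous_on UNIV (Top f)"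
proof -
  have c1: "continuous_on (UNIV \<times> cbox 0 1) (\<lambda>(x, t). t * Phi (fst x) (clamp (snd x) * t) (fst (f (fst x, clamp (snd x) * t))) (snd (f (fst x, clamp (snd x) * t))))"
    unfolding case_prod_beta
    by (intro continuous_intros cont_UNIV_comp[OF f]) 
  have c2: "continuous_on (UNIV \<times> cbox 0 1) (\<lambda>(x, t). clamp (snd x) * Lf (fst x) * Psi (clamp (snd x) * t) (fst (f (fst x, clamp (snd x) * t))))"
    unfolding case_prod_beta
    by (intro continuous_intros cont_UNIV_comp[OF f]) 
  have "continuous_on UNIV (\<lambda>x. integral (cbox 0 1) (\<lambda>t. t * Phi (fst x) (clamp (snd x) * t) (fst (f (fst x, clamp (snd x) * t))) (snd (f (fst x, clamp (snd x) * t)))))"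
    by (rule integral_continuous_on_param[OF c1])
  moreover have "continuous_on UNIV (\<lambda>x. integral (cbox 0 1) (\<lambda>t. clamp (snd x) * Lf (fst x) * Psi (clamp (snd x) * t) (fst (f (fst x, clamp (snd x) * t)))))"
    by (rule integral_continuous_on_param[OF c2])
  ultimately show ?thesis unfolding Top_def[abs_def] cbox_interval by (intro continuous_intros)
qed

lemma clamp_t: "t \<in> {0..1} \<Longrightarrow> clamp s * t \<in> {0..1}"
  using clamp_range[of s] by (auto intro: mult_le_one)

lemma Top_bd1: assumes "continuous_on UNIV f" shows "\<bar>fst (Top f x)\<bar> \<le> 8 * cc"
  unfolding Top_def fst_conv
proof (rule int_bd)
  show "continuous_on {0..1} (\<lambda>t. t * Phi (fst x) (clamp (snd x) * t) (fst (f (fst x, clamp (snd x) * t))) (snd (f (fst x, clamp (snd x) * t))))"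
    by (intro continuous_intros cont_UNIV_comp[OF assms])
  fix t :: real assume t: "t \<in> {0..1}"
  have "\<bar>t * Phi (fst x) (clamp (snd x) * t) (fst (f (fst x, clamp (snd x) * t))) (snd (f (fst x, clamp (snd x) * t)))\<bar>
     \<le> 1 * (8 * cc)"
    unfolding abs_mult using t clamp_t[OF t, of "snd x"] Phi_bd by (intro mult_mono) (auto simp: cc_def)
  then show "\<bar>t * Phi (fst x) (clamp (snd x) * t) (fst (f (fst x, clamp (snd x) * t))) (snd (f (fst x, clamp (snd x) * t)))\<bar> \<le> 8 * cc" by simp
qed

lemma Top_bd2: assumes "continuous_on UNIV f" shows "\<bar>snd (Top f x) - 1\<bar> \<le> cc"
  unfolding Top_def snd_conv add_diff_cancel_left'
proof (rule int_bd)
  show "continuous_on {0..1} (\<lambda>t. clamp (snd x) * Lf (fst x) * Psi (clamp (snd x) * t) (fst (f (fst x, clamp (snd x) * t))))"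
    by (intro continuous_intros cont_UNIV_comp[OF assms])
  fix t :: real assume t: "t \<in> {0..1}"
  have "\<bar>clamp (snd x) * Lf (fst x) * Psi (clamp (snd x) * t) (fst (f (fst x, clamp (snd x) * t)))\<bar>
     \<le> (1 * cc) * 1"
    unfolding abs_mult using clamp_range[of "snd x"] Lf_pos[of "fst x"] Lf_le[of "fst x"] Psi_bd
    by (intro mult_mono) (auto simp: cc_def)
  then show "\<bar>clamp (snd x) * Lf (fst x) * Psi (clamp (snd x) * t) (fst (f (fst x, clamp (snd x) * t)))\<bar> \<le> cc" by simp
qed

lemma Top_bcontfun: assumes "continuous_on UNIV f" shows "Top f \<in> bcontfun"
proof (rule bcontfun_normI[OF Top_cont[OF assms]])
  fix x
  have "norm (Top f x) = sqrt ((fst (Top f x))\<^sup>2 + (snd (Top f x))\<^sup>2)"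
    by (metis norm_Pair prod.collapse real_norm_def power2_abs)
  also have "\<dots> \<le> \<bar>fst (Top f x)\<bar> + \<bar>snd (Top f x)\<bar>" by (rule sqrt_sum_squares_le_sum_abs)
  also have "\<dots> \<le> 8 * cc + (1 + cc)" using Top_bd1[OF assms, of x] Top_bd2[OF assms, of x] by linarith
  finally show "norm (Top f x) \<le> 8 * cc + (1 + cc)" .
qed


lemma Top_contr:
  assumes f: "continuous_on UNIV f" and g: "continuous_on UNIV g" and D: "\<And>y. dist (f y) (g y) \<le> D"
  shows "dist (Top f x) (Top g x) \<le> D / 2"
proof -
  define a where "a = fst x"
  define \<tau> where "\<tau> = clamp (snd x)"
  define F1 where "F1 k t = t * Phi a (\<tau>*t) (fst (k (a, \<tau>*t))) (snd (k (a, \<tau>*t)))" for k :: "real \<times> real \<Rightarrow> real \<times> real" and t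
  define F2 where "F2 k t = \<tau> * Lf a * Psi (\<tau>*t) (fst (k (a, \<tau>*t)))" for k :: "real \<times> real \<Rightarrow> real \<times> real" and t
  have T: "Top k x = (integral {0..1} (F1 k), 1 + integral {0..1} (F2 k))" for k
    unfolding Top_def F1_def F2_def a_def \<tau>_def by simp
  have cF1: "continuous_on {0..1} (F1 k)" if "continuous_on UNIV k" for k
    unfolding F1_def by (intro continuous_intros cont_UNIV_comp[OF that])
  have cF2: "continuous_on {0..1} (F2 k)" if "continuous_on UNIV k" for k
    unfolding F2_def by (intro continuous_intros cont_UNIV_comp[OF that])
  have D0: "0 \<le> D" using D[of 0] zero_le_dist[of "f 0" "g 0"] by linarith
  have Dh: "\<bar>fst (f y) - fst (g y)\<bar> \<le> D" for y using dist_fst_le[of "f y" "g y"] D[of y] by (simp add: dist_real_def)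
  have Dm: "\<bar>snd (f y) - snd (g y)\<bar> \<le> D" for y using dist_snd_le[of "f y" "g y"] D[of y] by (simp add: dist_real_def)
  have st: "0 \<le> \<tau>*t" "\<tau>*t \<le> 1" if "t \<in> {0..1}" for t using clamp_t[OF that, of "snd x"] unfolding \<tau>_def by auto
  have d1: "\<bar>integral {0..1} (F1 f) - integral {0..1} (F1 g)\<bar> \<le> 200 * cc * D"
  proof -
    have "integral {0..1} (F1 f) - integral {0..1} (F1 g) = integral {0..1} (\<lambda>t. F1 f t - F1 g t)"
      by (rule integral_diff[symmetric]) (auto intro: integrable_continuous_interval cF1 f g)
    also have "\<bar>\<dots>\<bar> \<le> 200 * cc * D"
    proof (rule int_bd)
      show "continuous_on {0..1} (\<lambda>t. F1 f t - F1 g t)" by (intro continuous_intros cF1 f g)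
      fix t :: real assume t: "t \<in> {0..1}"
      have "\<bar>F1 f t - F1 g t\<bar> = \<bar>t\<bar> * \<bar>Phi a (\<tau>*t) (fst (f (a, \<tau>*t))) (snd (f (a, \<tau>*t))) - Phi a (\<tau>*t) (fst (g (a, \<tau>*t))) (snd (g (a, \<tau>*t)))\<bar>"
        unfolding F1_def by (simp add: abs_mult[symmetric] right_diff_distrib)
      also have "\<dots> \<le> 1 * (100 * cc * (\<bar>fst (f (a, \<tau>*t)) - fst (g (a, \<tau>*t))\<bar> + \<bar>snd (f (a, \<tau>*t)) - snd (g (a, \<tau>*t))\<bar>))"
        using t Phi_lip[OF st[OF t]] by (intro mult_mono) (auto simp: cc_def)
      also have "\<dots> \<le> 1 * (100 * cc * (D + D))"
        using Dh Dm by (intro mult_left_mono add_mono) (auto simp: cc_def)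
      finally show "\<bar>F1 f t - F1 g t\<bar> \<le> 200 * cc * D" by simp
    qed
    finally show ?thesis .
  qed
  have d2: "\<bar>integral {0..1} (F2 f) - integral {0..1} (F2 g)\<bar> \<le> 4 * cc * D"
  proof -
    have "integral {0..1} (F2 f) - integral {0..1} (F2 g) = integral {0..1} (\<lambda>t. F2 f t - F2 g t)"
      by (rule integral_diff[symmetric]) (auto intro: integrable_continuous_interval cF2 f g)
    also have "\<bar>\<dots>\<bar> \<le> 4 * cc * D"
    proof (rule int_bd)
      show "continuous_on {0..1} (\<lambda>t. F2 f t - F2 g t)" by (intro continuous_intros cF2 f g)
      fix t :: real assume t: "t \<in> {0..1}"
      have "\<bar>F2 f t - F2 g t\<bar> = \<bar>\<tau> * Lf a\<bar> * \<bar>Psi (\<tau>*t) (fst (f (a, \<tau>*t))) - Psi (\<tau>*t) (fst (g (a, \<tau>*t)))\<bar>"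
        unfolding F2_def by (simp add: abs_mult[symmetric] right_diff_distrib)
      also have "\<dots> \<le> cc * (4 * \<bar>fst (f (a, \<tau>*t)) - fst (g (a, \<tau>*t))\<bar>)"
      proof (intro mult_mono)
        have "\<bar>\<tau> * Lf a\<bar> = \<tau> * Lf a" using clamp_range[of "snd x"] Lf_pos[of a] unfolding \<tau>_def by simp
        also have "\<dots> \<le> 1 * cc" using clamp_range[of "snd x"] Lf_pos[of a] Lf_le[of a] unfolding \<tau>_def
          by (intro mult_mono) auto
        finally show "\<bar>\<tau> * Lf a\<bar> \<le> cc" by simp
        show "\<bar>Psi (\<tau>*t) (fst (f (a, \<tau>*t))) - Psi (\<tau>*t) (fst (g (a, \<tau>*t)))\<bar> \<le> 4 * \<bar>fst (f (a, \<tau>*t)) - fst (g (a, \<tau>*t))\<bar>"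
          using Psi_lip[OF st[OF t]] by blast
      qed (auto simp: cc_def)
      also have "\<dots> \<le> cc * (4 * D)" using Dh by (intro mult_left_mono) (auto simp: cc_def)
      finally show "\<bar>F2 f t - F2 g t\<bar> \<le> 4 * cc * D" by simp
    qed
    finally show ?thesis .
  qed
  have "dist (Top f x) (Top g x) = sqrt ((integral {0..1} (F1 f) - integral {0..1} (F1 g))\<^sup>2 + (integral {0..1} (F2 f) - integral {0..1} (F2 g))\<^sup>2)"
    unfolding T dist_Pair_Pair dist_real_def by simp
  also have "\<dots> \<le> \<bar>integral {0..1} (F1 f) - integral {0..1} (F1 g)\<bar> + \<bar>integral {0..1} (F2 f) - integral {0..1} (F2 g)\<bar>"
    by (rule sqrt_sum_squares_le_sum_abs)
  also have "\<dots> \<le> 200 * cc * D + 4 * cc * D" using d1 d2 by linarith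
  also have "\<dots> \<le> D / 2" using D0 by (simp add: cc_def)
  finally show ?thesis .
qed

definition Tb :: "((real \<times> real) \<Rightarrow>\<^sub>C (real \<times> real)) \<Rightarrow> ((real \<times> real) \<Rightarrow>\<^sub>C (real \<times> real))" where
  "Tb p = Bcontfun (Top (apply_bcontfun p))"

lemma Tb_apply: "apply_bcontfun (Tb p) = Top (apply_bcontfun p)"
  unfolding Tb_def by (rule Bcontfun_inverse[OF Top_bcontfun[OF continuous_on_apply_bcontfun]])

lemma fixpoint_exists:
  "\<exists>P. continuous_on UNIV P \<and> (\<forall>x. P x = Top P x)"
proof -
  have "\<exists>!p. Tb p = p"
  proof (rule banach_fix_type[of "1/2"])
    show "\<forall>p q. dist (Tb p) (Tb q) \<le> 1/2 * dist p q"
    proof (intro allI)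
      fix p q
      show "dist (Tb p) (Tb q) \<le> 1/2 * dist p q"
      proof (rule dist_bound)
        fix x
        show "dist (apply_bcontfun (Tb p) x) (apply_bcontfun (Tb q) x) \<le> 1/2 * dist p q"
        proof -
          have "dist (Top (apply_bcontfun p) x) (Top (apply_bcontfun q) x) \<le> dist p q / 2"
            by (rule Top_contr) (auto intro: dist_bounded)
          then show ?thesis unfolding Tb_apply by simp
        qed
      qed
    qed
  qed auto
  then obtain p where "Tb p = p" by blast
  then have "apply_bcontfun p = Top (apply_bcontfun p)" using Tb_apply[of p] by simp
  then show ?thesis by (intro exI[of _ "apply_bcontfun p"]) (auto simp: fun_eq_iff)
qed


lemma subst01:
  fixes g :: "real \<Rightarrow> real"
  assumes g: "continuous_on {0..1} g" and \<tau>: "\<tau> \<in> {0..1}"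
  shows "integral {0..1} (\<lambda>t. \<tau> * g (\<tau> * t)) = integral {0..\<tau>} g"
proof -
  define F where "F x = integral {0..x} g" for x
  have dF: "(F has_vector_derivative g x) (at x within {0..1})" if "x \<in> {0..1}" for x
    unfolding F_def by (rule integral_has_vector_derivative[OF g that])
  have "((\<lambda>t. F (\<tau> * t)) has_vector_derivative \<tau> * g (\<tau> * t)) (at t within {0..1})" if t: "t \<in> {0..1}" for t
  proof -
    have "((\<lambda>t. \<tau> * t) has_real_derivative \<tau>) (at t within {0..1})" by (auto intro!: derivative_eq_intros)
    then have 1: "((\<lambda>t. \<tau> * t) has_vector_derivative \<tau>) (at t within {0..1})"
      by (simp add: has_real_derivative_iff_has_vector_derivative)
    have sub: "(\<lambda>t. \<tau> * t) ` {0..1} \<subseteq> {0..1}" using \<tau> by (auto intro: mult_le_one)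
    have "\<tau> * t \<in> {0..1}" using \<tau> t by (auto intro: mult_le_one)
    then have 2: "(F has_vector_derivative g (\<tau>*t)) (at (\<tau>*t) within (\<lambda>t. \<tau>*t) ` {0..1})"
      by (intro has_vector_derivative_within_subset[OF dF sub])
    from vector_diff_chain_within[OF 1 2] show ?thesis by (simp add: o_def)
  qed
  then have "((\<lambda>t. \<tau> * g (\<tau> * t)) has_integral (F (\<tau>*1) - F (\<tau>*0))) {0..1}"
    by (intro fundamental_theorem_of_calculus) auto
  then have "((\<lambda>t. \<tau> * g (\<tau> * t)) has_integral integral {0..\<tau>} g) {0..1}" by (simp add: F_def)
  then show ?thesis by (rule integral_unique)
qed

lemma int_t: "integral {0..1} (\<lambda>t::real. t * c) = c / 2"
proof -
  have "((\<lambda>t::real. t * c) has_integral ((\<lambda>t. t\<^sup>2/2 * c) 1 - (\<lambda>t. t\<^sup>2/2 * c) 0)) {0..1}"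
    by (intro fundamental_theorem_of_calculus)
       (auto intro!: derivative_eq_intros simp: has_real_derivative_iff_has_vector_derivative[symmetric])
  then show ?thesis by (simp add: integral_unique)
qed

lemma clamp_idem: "clamp (clamp x) = clamp x" using clamp_id[OF clamp_range] .

locale fp =
  fixes P :: "real \<times> real \<Rightarrow> real \<times> real"
  assumes contP: "continuous_on UNIV P" and fixP: "\<And>x. P x = Top P x"
begin

definition H where "H a \<tau> = fst (P (a, \<tau>))"
definition Mf where "Mf a \<tau> = snd (P (a, \<tau>))"
definition ph where "ph a \<sigma> = Phi a \<sigma> (H a \<sigma>) (Mf a \<sigma>)"
definition ps where "ps a \<sigma> = Psi \<sigma> (H a \<sigma>)"

lemma P_clamp: "P (a, \<tau>) = P (a, clamp \<tau>)"
  using fixP[of "(a, \<tau>)"] fixP[of "(a, clamp \<tau>)"] by (simp add: Top_def clamp_idem)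

lemma H_bd: "\<bar>H a \<tau>\<bar> \<le> 8 * cc" unfolding H_def using Top_bd1[OF contP] fixP by metis
lemma Mf_bd: "\<bar>Mf a \<tau> - 1\<bar> \<le> cc" unfolding Mf_def using Top_bd2[OF contP] fixP by metis

lemma cont_H[continuous_intros]: "continuous_on S A \<Longrightarrow> continuous_on S (\<lambda>x. H a (A x))"
  unfolding H_def by (intro continuous_intros cont_UNIV_comp[OF contP])
lemma cont_Mf[continuous_intros]: "continuous_on S A \<Longrightarrow> continuous_on S (\<lambda>x. Mf a (A x))"
  unfolding Mf_def by (intro continuous_intros cont_UNIV_comp[OF contP])
lemma cont_ph[continuous_intros]: "continuous_on S A \<Longrightarrow> continuous_on S (\<lambda>x. ph a (A x))"
  unfolding ph_def by (intro continuous_intros)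
lemma cont_ps[continuous_intros]: "continuous_on S A \<Longrightarrow> continuous_on S (\<lambda>x. ps a (A x))"
  unfolding ps_def by (intro continuous_intros)

lemma cont_H'[continuous_intros]: "continuous_on S (H a)" using cont_H[of S "\<lambda>x. x"] by simp
lemma cont_Mf'[continuous_intros]: "continuous_on S (Mf a)" using cont_Mf[of S "\<lambda>x. x"] by simp
lemma cont_ph'[continuous_intros]: "continuous_on S (ph a)" using cont_ph[of S "\<lambda>x. x"] by simp
lemma cont_ps'[continuous_intros]: "continuous_on S (ps a)" using cont_ps[of S "\<lambda>x. x"] by simp
lemma cont_ph''[continuous_intros]: "continuous_on S (\<lambda>x. x * ph a x)" by (intro continuous_intros)
lemma cont_ps''[continuous_intros]: "continuous_on S (\<lambda>x. Lf a * ps a x)" by (intro continuous_intros)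

lemma H_eq: "\<tau> \<in> {0..1} \<Longrightarrow> H a \<tau> = integral {0..1} (\<lambda>t. t * ph a (\<tau> * t))"
  unfolding H_def ph_def Mf_def using fixP[of "(a, \<tau>)"] by (simp add: Top_def clamp_id)
lemma Mf_eq: "\<tau> \<in> {0..1} \<Longrightarrow> Mf a \<tau> = 1 + integral {0..1} (\<lambda>t. \<tau> * Lf a * ps a (\<tau> * t))"
  unfolding H_def ps_def Mf_def using fixP[of "(a, \<tau>)"] by (simp add: Top_def clamp_id)

definition GG where "GG a x = integral {0..x} (\<lambda>\<sigma>. \<sigma> * ph a \<sigma>)"

lemma GG_eq: "\<tau> \<in> {0..1} \<Longrightarrow> \<tau> * (\<tau> * H a \<tau>) = GG a \<tau>"
proof -
  assume t: "\<tau> \<in> {0..1}"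
  have "\<tau> * (\<tau> * H a \<tau>) = integral {0..1} (\<lambda>t. \<tau> * (\<tau> * (t * ph a (\<tau> * t))))"
    unfolding H_eq[OF t] by simp
  also have "\<dots> = integral {0..1} (\<lambda>t. \<tau> * ((\<lambda>\<sigma>. \<sigma> * ph a \<sigma>) (\<tau> * t)))" by (simp add: algebra_simps)
  also have "\<dots> = GG a \<tau>" unfolding GG_def by (rule subst01[OF _ t]) (intro continuous_intros)
  finally show ?thesis .
qed

lemma Mf_eq2: "\<tau> \<in> {0..1} \<Longrightarrow> Mf a \<tau> = 1 + integral {0..\<tau>} (\<lambda>\<sigma>. Lf a * ps a \<sigma>)"
proof -
  assume t: "\<tau> \<in> {0..1}"
  have "Mf a \<tau> = 1 + integral {0..1} (\<lambda>t. \<tau> * ((\<lambda>\<sigma>. Lf a * ps a \<sigma>) (\<tau> * t)))"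
    unfolding Mf_eq[OF t] by (simp add: algebra_simps)
  also have "\<dots> = 1 + integral {0..\<tau>} (\<lambda>\<sigma>. Lf a * ps a \<sigma>)" by (subst subst01[OF _ t]) (auto intro: continuous_intros)
  finally show ?thesis .
qed

lemma H0: "H a 0 = ph a 0 / 2"
  using H_eq[of 0 a] int_t[of "ph a 0"] by simp

lemma GG_deriv: "\<tau> \<in> {0..1} \<Longrightarrow> (GG a has_real_derivative \<tau> * ph a \<tau>) (at \<tau> within {0..1})"
  unfolding GG_def has_real_derivative_iff_has_vector_derivative
  by (rule integral_has_vector_derivative) (auto intro: continuous_intros)

lemma Mf_deriv: "\<tau> \<in> {0..1} \<Longrightarrow> (Mf a has_real_derivative Lf a * ps a \<tau>) (at \<tau> within {0..1})"
proof -
  assume t: "\<tau> \<in> {0..1}"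
  have "((\<lambda>x. integral {0..x} (\<lambda>\<sigma>. Lf a * ps a \<sigma>)) has_vector_derivative Lf a * ps a \<tau>) (at \<tau> within {0..1})"
    by (rule integral_has_vector_derivative[OF _ t]) (intro continuous_intros)
  then have "((\<lambda>x. integral {0..x} (\<lambda>\<sigma>. Lf a * ps a \<sigma>)) has_real_derivative Lf a * ps a \<tau>) (at \<tau> within {0..1})"
    by (simp add: has_real_derivative_iff_has_vector_derivative)
  from DERIV_add[OF DERIV_const[of 1] this]
  have "((\<lambda>x. 1 + integral {0..x} (\<lambda>\<sigma>. Lf a * ps a \<sigma>)) has_real_derivative Lf a * ps a \<tau>) (at \<tau> within {0..1})"
    by simp
  then show ?thesis
    by (rule has_field_derivative_transform_within[where d=1]) (use t Mf_eq2 in auto)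
qed

lemma w_deriv: "\<tau> \<in> {0..1} \<Longrightarrow> ((\<lambda>x. x * H a x) has_real_derivative ph a \<tau> - H a \<tau>) (at \<tau> within {0..1})"
proof -
  assume t: "\<tau> \<in> {0..1}"
  show ?thesis
  proof (cases "\<tau> = 0")
    case True
    have "isCont (H a) 0" using cont_H'[of UNIV a] by (simp add: continuous_on_eq_continuous_within)
    then have c: "continuous (at 0 within {0..1}) (H a)" by (rule continuous_at_imp_continuous_at_within)
    have "((\<lambda>y. H a y) \<longlongrightarrow> H a 0) (at 0 within {0..1})" using c by (simp add: continuous_within)
    then have "((\<lambda>y. (y * H a y - 0 * H a 0) / (y - 0)) \<longlongrightarrow> H a 0) (at 0 within {0..1})"
      by (rule tendsto_cong[THEN iffD1, rotated]) (auto simp: eventually_at_filter)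
    moreover have e: "ph a 0 - H a 0 = H a 0" using H0[of a] by simp
    ultimately show ?thesis unfolding True has_field_derivative_iff by (simp only: e)
  next
    case False
    then have tp: "\<tau> > 0" using t by auto
    have "((\<lambda>x. GG a x / x) has_real_derivative (\<tau> * ph a \<tau> * \<tau> - GG a \<tau> * 1) / (\<tau> * \<tau>)) (at \<tau> within {0..1})"
      by (rule DERIV_divide[OF GG_deriv[OF t]]) (use tp in \<open>auto intro!: derivative_eq_intros\<close>)
    moreover have "(\<tau> * ph a \<tau> * \<tau> - GG a \<tau> * 1) / (\<tau> * \<tau>) = ph a \<tau> - H a \<tau>"
      using GG_eq[OF t, symmetric] tp by (simp add: field_simps)
    ultimately have d: "((\<lambda>x. GG a x / x) has_real_derivative ph a \<tau> - H a \<tau>) (at \<tau> within {0..1})" by simp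
    show ?thesis
    proof (rule has_field_derivative_transform_within[OF d tp t])
      fix x assume x: "x \<in> {0..1}" "dist x \<tau> < \<tau>"
      then have "x > 0" by (auto simp: dist_real_def)
      then show "GG a x / x = x * H a x" using GG_eq[OF x(1)] by (simp add: field_simps)
    qed
  qed
qed

end


lemma scale_chain:
  assumes d: "(f has_real_derivative D) (at (r/K) within {0..1})" and K: "K > 0" and r: "r \<in> {0..K}"
  shows "((\<lambda>r. f (r/K)) has_real_derivative D / K) (at r within {0..K})"
proof -
  have sub: "(\<lambda>r. r/K) ` {0..K} \<subseteq> {0..1}" using K by (auto simp: divide_le_eq_1)
  have 1: "(f has_real_derivative D) (at ((\<lambda>r. r/K) r) within (\<lambda>r. r/K) ` {0..K})"
    using has_field_derivative_subset[OF d sub] by simp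
  have 2: "((\<lambda>r. r/K) has_real_derivative 1/K) (at r within {0..K})"
    using K by (auto intro!: derivative_eq_intros)
  from DERIV_image_chain[OF 1 2] show ?thesis by (simp add: o_def)
qed

lemma Q_deriv:
  fixes w :: real
  assumes "\<bar>w\<bar> \<le> 1/2"
  shows "((\<lambda>w. w / sqrt (1 - w\<^sup>2)) has_real_derivative 1 / ((1 - w\<^sup>2) * sqrt (1 - w\<^sup>2))) (at w)"
proof -
  define s where "s = sqrt (1 - w\<^sup>2)"
  have s: "s \<ge> 1/2" unfolding s_def by (rule sq_bd[OF assms])
  have s2: "s\<^sup>2 = 1 - w\<^sup>2" unfolding s_def by (rule sq_sq[OF assms])
  have pos: "0 < 1 - w\<^sup>2" using sq4[OF assms] by linarith
  have ds: "((\<lambda>w. sqrt (1 - w\<^sup>2)) has_real_derivative inverse s / 2 * (- (2 * w))) (at w)"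
    unfolding s_def
    by (rule DERIV_chain2[where g="\<lambda>w. 1 - w\<^sup>2" and x=w, OF DERIV_real_sqrt[OF pos]]) (auto intro!: derivative_eq_intros)
  have "((\<lambda>w. w / sqrt (1 - w\<^sup>2)) has_real_derivative (1 * sqrt (1 - w\<^sup>2) - w * (inverse s / 2 * (- (2 * w)))) / (sqrt (1 - w\<^sup>2) * sqrt (1 - w\<^sup>2))) (at w)"
    by (rule DERIV_divide[OF DERIV_ident ds]) (use s pos in \<open>simp add: s_def\<close>)
  then have "((\<lambda>w. w / sqrt (1 - w\<^sup>2)) has_real_derivative (1 * s - w * (inverse s / 2 * (- (2 * w)))) / (s * s)) (at w)"
    unfolding s_def[symmetric] .
  moreover have "(1 * s - w * (inverse s / 2 * (- (2 * w)))) / (s * s) = 1 / ((1 - w\<^sup>2) * s)"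
  proof -
    have "(1 * s - w * (inverse s / 2 * (- (2 * w)))) / (s * s) = (s\<^sup>2 + w\<^sup>2) / (s * s * s)"
      using s by (simp add: field_simps power2_eq_square)
    also have "\<dots> = 1 / ((1 - w\<^sup>2) * s)" using s2 s by (simp add: power2_eq_square)
    finally show ?thesis .
  qed
  ultimately show ?thesis unfolding s_def by simp
qed

lemma sqrt_1pQ:
  fixes w :: real
  assumes "\<bar>w\<bar> \<le> 1/2"
  shows "sqrt (1 + (w / sqrt (1 - w\<^sup>2))\<^sup>2) = 1 / sqrt (1 - w\<^sup>2)"
proof -
  define s where "s = sqrt (1 - w\<^sup>2)"
  have s: "s \<ge> 1/2" unfolding s_def by (rule sq_bd[OF assms])
  have s2: "s\<^sup>2 = 1 - w\<^sup>2" unfolding s_def by (rule sq_sq[OF assms])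
  have "1 + (w / s)\<^sup>2 = (1 / s)\<^sup>2" using s s2 by (simp add: field_simps power2_eq_square)
  then have "sqrt (1 + (w / s)\<^sup>2) = \<bar>1 / s\<bar>" by simp
  then show ?thesis using s unfolding s_def[symmetric] by simp
qed

lemma aux_div: "(p::real) > 0 \<Longrightarrow> s * (w / p) / (1 / p) = s * w" by simp

context fp begin

definition WW where "WW a \<tau> = clamp \<tau> * H a \<tau>"
definition UU where "UU a u0 r = u0 * Mf a (r / (u0 * Lf a))"
definition UU1 where "UU1 a u0 r = WW a (r / (u0 * Lf a)) / sqrt (1 - (WW a (r / (u0 * Lf a)))\<^sup>2)"
definition UU2 where "UU2 a u0 r = (ph a (clamp (r / (u0 * Lf a))) - H a (r / (u0 * Lf a))) /
   ((1 - (WW a (r / (u0 * Lf a)))\<^sup>2) * sqrt (1 - (WW a (r / (u0 * Lf a)))\<^sup>2)) / (u0 * Lf a)"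

lemma WW_bd: "\<bar>WW a \<tau>\<bar> \<le> 1/2"
proof -
  have "\<bar>WW a \<tau>\<bar> = clamp \<tau> * \<bar>H a \<tau>\<bar>" using clamp_range[of \<tau>] by (simp add: WW_def abs_mult)
  also have "\<dots> \<le> 1 * (8 * cc)" using clamp_range[of \<tau>] H_bd[of a \<tau>] by (intro mult_mono) auto
  finally show ?thesis by (simp add: cc_def)
qed

lemma WW_eq: "\<tau> \<in> {0..1} \<Longrightarrow> WW a \<tau> = \<tau> * H a \<tau>" by (simp add: WW_def clamp_id)

lemma ps_eq: "\<tau> \<in> {0..1} \<Longrightarrow> ps a \<tau> = WW a \<tau> / sqrt (1 - (WW a \<tau>)\<^sup>2)"
  unfolding ps_def Psi_def using clw_id[OF WW_bd[of a \<tau>]] WW_eq by simp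

lemma clmM: "clm (Mf a \<tau>) = Mf a \<tau>" using Mf_bd[of a \<tau>] by (intro clm_id) (simp add: cc_def)

lemma ph_eq: "\<tau> \<in> {0..1} \<Longrightarrow> ph a \<tau> = a * Lf a * ((Mf a \<tau> * sqrt (1 - (WW a \<tau>)\<^sup>2) - Lf a * \<tau> * WW a \<tau>) / ((Lf a * \<tau>)\<^sup>2 + (Mf a \<tau>)\<^sup>2))"
  unfolding ph_def Phi_def Phi0_def clmM using clw_id[OF WW_bd[of a \<tau>]] WW_eq by simp

lemma WW_deriv: "\<tau> \<in> {0..1} \<Longrightarrow> (WW a has_real_derivative ph a \<tau> - H a \<tau>) (at \<tau> within {0..1})"
  by (rule has_field_derivative_transform_within[OF w_deriv zero_less_one]) (auto simp: WW_eq)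

lemma UU_deriv:
  assumes u0: "u0 > 0" and r: "r \<in> {0..u0 * Lf a}"
  shows "(UU a u0 has_real_derivative UU1 a u0 r) (at r within {0..u0 * Lf a})"
proof -
  define K where "K = u0 * Lf a"
  have K: "K > 0" unfolding K_def using u0 Lf_pos by simp
  have t: "r / K \<in> {0..1}" using r K unfolding K_def[symmetric] by (auto simp: divide_le_eq_1)
  have "((\<lambda>r. Mf a (r/K)) has_real_derivative Lf a * ps a (r/K) / K) (at r within {0..K})"
    by (rule scale_chain[OF Mf_deriv[OF t] K]) (use r in \<open>simp add: K_def\<close>)
  from DERIV_cmult[OF this, of u0]
  have "((\<lambda>r. u0 * Mf a (r/K)) has_real_derivative u0 * (Lf a * ps a (r/K) / K)) (at r within {0..K})" .
  moreover have "u0 * (Lf a * ps a (r/K) / K) = ps a (r/K)" using K u0 Lf_pos[of a] by (simp add: K_def)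
  moreover have "ps a (r/K) = UU1 a u0 r" by (simp add: ps_eq[OF t[unfolded K_def]] UU1_def K_def)
  ultimately show ?thesis unfolding UU_def[abs_def] K_def by simp
qed

lemma UU1_deriv:
  assumes u0: "u0 > 0" and r: "r \<in> {0..u0 * Lf a}"
  shows "(UU1 a u0 has_real_derivative UU2 a u0 r) (at r within {0..u0 * Lf a})"
proof -
  define K where "K = u0 * Lf a"
  have K: "K > 0" unfolding K_def using u0 Lf_pos by simp
  have t: "r / K \<in> {0..1}" using r K unfolding K_def[symmetric] by (auto simp: divide_le_eq_1)
  have 1: "((\<lambda>r. WW a (r/K)) has_real_derivative (ph a (r/K) - H a (r/K)) / K) (at r within {0..K})"
    by (rule scale_chain[OF WW_deriv[OF t] K]) (use r in \<open>simp add: K_def\<close>)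
  have "((\<lambda>r. (\<lambda>w. w / sqrt (1 - w\<^sup>2)) (WW a (r/K))) has_real_derivative
      1 / ((1 - (WW a (r/K))\<^sup>2) * sqrt (1 - (WW a (r/K))\<^sup>2)) * ((ph a (r/K) - H a (r/K)) / K)) (at r within {0..K})"
    by (rule DERIV_chain2[OF Q_deriv[OF WW_bd] 1])
  moreover have "1 / ((1 - (WW a (r/K))\<^sup>2) * sqrt (1 - (WW a (r/K))\<^sup>2)) * ((ph a (r/K) - H a (r/K)) / K) = UU2 a u0 r"
    unfolding UU2_def K_def[symmetric] clamp_id[OF t] by simp
  ultimately show ?thesis unfolding UU1_def[abs_def] K_def by simp
qed

lemma UU0: "UU a u0 0 = u0" unfolding UU_def using Mf_eq2[of 0 a] by simp
lemma UU1_0: "UU1 a u0 0 = 0" unfolding UU1_def WW_def by (simp add: clamp_def)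

lemma ODE:
  assumes u0: "u0 > 0" and r: "r \<in> {0<..<u0 * Lf a}"
  shows "((\<lambda>s. s * UU1 a u0 s / sqrt (1 + (UU1 a u0 s)\<^sup>2)) has_real_derivative
           a * (r * (UU a u0 r - r * UU1 a u0 r)) / ((r\<^sup>2 + (UU a u0 r)\<^sup>2) * sqrt (1 + (UU1 a u0 r)\<^sup>2))) (at r)"
proof -
  define K where "K = u0 * Lf a"
  have K: "K > 0" unfolding K_def using u0 Lf_pos by simp
  define \<tau> where "\<tau> = r / K"
  have t: "\<tau> \<in> {0<..<1}" using r K unfolding \<tau>_def K_def[symmetric] by auto
  then have t1: "\<tau> \<in> {0..1}" by auto
  have "(GG a has_real_derivative \<tau> * ph a \<tau>) (at \<tau>)"
    using GG_deriv[OF t1, of a] at_within_Icc_at[of 0 \<tau> 1] t by simp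
  then have "(GG a has_real_derivative \<tau> * ph a \<tau>) (at (r/K) within {0..1})"
    unfolding \<tau>_def by (rule has_field_derivative_at_within)
  from scale_chain[OF this K] r have "((\<lambda>s. GG a (s/K)) has_real_derivative \<tau> * ph a \<tau> / K) (at r within {0..K})"
    unfolding K_def by auto
  then have "((\<lambda>s. GG a (s/K)) has_real_derivative \<tau> * ph a \<tau> / K) (at r)"
    using at_within_Icc_at[of 0 r K] r unfolding K_def by simp
  from DERIV_cmult[OF this, of K]
  have d: "((\<lambda>s. K * GG a (s/K)) has_real_derivative \<tau> * ph a \<tau>) (at r)" using K by simp
  have eqf: "K * GG a (s/K) = s * UU1 a u0 s / sqrt (1 + (UU1 a u0 s)\<^sup>2)" if s: "s \<in> {0<..<K}" for s
  proof -
    have ts: "s / K \<in> {0..1}" using s K by auto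
    have p: "sqrt (1 - (WW a (s/K))\<^sup>2) > 0" using sq_bd(1)[OF WW_bd[of a "s/K"]] by linarith
    have "s * UU1 a u0 s / sqrt (1 + (UU1 a u0 s)\<^sup>2) = s * WW a (s/K)"
      unfolding UU1_def K_def[symmetric] sqrt_1pQ[OF WW_bd] using aux_div[OF p] by blast
    also have "\<dots> = K * ((s/K) * ((s/K) * H a (s/K)))" using K unfolding WW_eq[OF ts] by (simp add: field_simps)
    also have "\<dots> = K * GG a (s/K)" using GG_eq[OF ts] by simp
    finally show ?thesis by simp
  qed
  have d2: "((\<lambda>s. s * UU1 a u0 s / sqrt (1 + (UU1 a u0 s)\<^sup>2)) has_real_derivative \<tau> * ph a \<tau>) (at r)"
    by (rule has_field_derivative_transform_within_open[OF d, of "{0<..<K}"]) (use r eqf in \<open>auto simp: K_def\<close>)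
  define w where "w = WW a \<tau>"
  define sw where "sw = sqrt (1 - w\<^sup>2)"
  define M where "M = Mf a \<tau>"
  define L where "L = Lf a"
  have sw: "sw \<ge> 1/2" unfolding sw_def w_def by (rule sq_bd[OF WW_bd])
  have M: "M \<ge> 1/2" using Mf_bd[of a \<tau>] unfolding M_def cc_def by linarith
  have L: "L > 0" unfolding L_def by (rule Lf_pos)
  have rK: "r = K * \<tau>" unfolding \<tau>_def using K by simp
  have U: "UU a u0 r = u0 * M" unfolding UU_def M_def \<tau>_def K_def by simp
  have U1: "UU1 a u0 r = w / sw" unfolding UU1_def w_def sw_def \<tau>_def K_def by simp
  have sq: "sqrt (1 + (UU1 a u0 r)\<^sup>2) = 1 / sw" unfolding U1 sw_def w_def by (rule sqrt_1pQ[OF WW_bd])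
  have ph: "ph a \<tau> = a * L * ((M * sw - L * \<tau> * w) / ((L * \<tau>)\<^sup>2 + M\<^sup>2))"
    unfolding ph_eq[OF t1] M_def L_def sw_def w_def ..
  have den: "(L * \<tau>)\<^sup>2 + M\<^sup>2 > 0" using M by (simp add: add_nonneg_pos)
  have "a * (r * (UU a u0 r - r * UU1 a u0 r)) / ((r\<^sup>2 + (UU a u0 r)\<^sup>2) * sqrt (1 + (UU1 a u0 r)\<^sup>2))
     = a * (r * (u0 * M - r * (w / sw))) / ((r\<^sup>2 + (u0 * M)\<^sup>2) * (1 / sw))"
    unfolding sq unfolding U U1 ..
  also have "\<dots> = \<tau> * ph a \<tau>"
  proof -
    have sw0: "sw \<noteq> 0" using sw by linarith
    have d0: "(L * \<tau>)\<^sup>2 + M\<^sup>2 \<noteq> 0" using den by linarith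
    have u00: "u0 \<noteq> 0" using u0 by simp
    define X where "X = (L * \<tau>)\<^sup>2 + M\<^sup>2"
    define N where "N = L * \<tau> * (M * sw - L * \<tau> * w)"
    have s1: "r\<^sup>2 + (u0 * M)\<^sup>2 = u0\<^sup>2 * X" unfolding X_def rK K_def L_def[symmetric] by (simp add: power2_eq_square algebra_simps)
    have s2: "r * (u0 * M - r * (w / sw)) = u0\<^sup>2 * N / sw" unfolding N_def rK K_def L_def[symmetric] using sw0
      by (simp add: power2_eq_square field_simps)
    have X0: "X \<noteq> 0" using d0 unfolding X_def .
    have gen: "\<And>a p N q X::real. p \<noteq> 0 \<Longrightarrow> q \<noteq> 0 \<Longrightarrow> X \<noteq> 0 \<Longrightarrow> a * (p * N / q) / (p * X * (1 / q)) = a * N / X"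
      by (simp add: field_simps)
    have "a * (r * (u0 * M - r * (w / sw))) / ((r\<^sup>2 + (u0 * M)\<^sup>2) * (1 / sw)) = a * N / X"
      unfolding s1 s2 by (rule gen) (use u00 sw0 X0 in auto)
    also have "\<dots> = a * (L * \<tau> * (M * sw - L * \<tau> * w)) / ((L * \<tau>)\<^sup>2 + M\<^sup>2)" unfolding N_def X_def ..
    also have "\<dots> = \<tau> * ph a \<tau>" unfolding ph by simp
    finally show ?thesis .
  qed
  finally have "\<tau> * ph a \<tau> = a * (r * (UU a u0 r - r * UU1 a u0 r)) / ((r\<^sup>2 + (UU a u0 r)\<^sup>2) * sqrt (1 + (UU1 a u0 r)\<^sup>2))" ..
  with d2 show ?thesis by simp
qed

end


context fp begin

lemma cont_all: "continuous_on {x. fst (snd x) > 0}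
   (\<lambda>x. (UU (fst x) (fst (snd x)) (snd (snd x)), UU1 (fst x) (fst (snd x)) (snd (snd x)), UU2 (fst x) (fst (snd x)) (snd (snd x))))"
proof -
  let ?S = "{x::real \<times> real \<times> real. fst (snd x) > 0}"
  have nz: "\<forall>x\<in>?S. fst (snd x) * Lf (fst x) \<noteq> 0"
  proof
    fix x assume "x \<in> ?S"
    then show "fst (snd x) * Lf (fst x) \<noteq> 0" using Lf_pos[of "fst x"] by simp
  qed
  have nz2: "\<And>y. (1 - y\<^sup>2) * sqrt (1 - y\<^sup>2) \<noteq> 0 \<Longrightarrow> True" by simp
  have wn: "(1 - (WW a t)\<^sup>2) * sqrt (1 - (WW a t)\<^sup>2) \<noteq> 0" for a t
  proof -
    have "sqrt (1 - (WW a t)\<^sup>2) \<ge> 1/2" by (rule sq_bd[OF WW_bd])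
    moreover have "(WW a t)\<^sup>2 \<le> 1/4" by (rule sq4[OF WW_bd])
    ultimately show ?thesis by auto
  qed
  have wn': "sqrt (1 - (WW a t)\<^sup>2) \<noteq> 0" for a t using sq_bd(1)[OF WW_bd[of a t]] by linarith
  have ct: "continuous_on ?S (\<lambda>x. snd (snd x) / (fst (snd x) * Lf (fst x)))"
    using nz by (intro continuous_intros) auto
  have cP: "continuous_on ?S (\<lambda>x. P (fst x, B x))" if "continuous_on ?S B" for B
    by (intro cont_UNIV_comp[OF contP] continuous_intros that)
  have cPf: "continuous_on ?S (\<lambda>x. fst (P (fst x, B x)))" if "continuous_on ?S B" for B
    using cP[OF that] by (intro continuous_intros)
  have cPs: "continuous_on ?S (\<lambda>x. snd (P (fst x, B x)))" if "continuous_on ?S B" for B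
    using cP[OF that] by (intro continuous_intros)
  have cW: "continuous_on ?S (\<lambda>x. WW (fst x) (snd (snd x) / (fst (snd x) * Lf (fst x))))"
    unfolding WW_def H_def by (intro continuous_intros cPf ct)
  have c1: "continuous_on ?S (\<lambda>x. UU (fst x) (fst (snd x)) (snd (snd x)))"
    unfolding UU_def Mf_def by (intro continuous_intros cPs ct)
  have c2: "continuous_on ?S (\<lambda>x. UU1 (fst x) (fst (snd x)) (snd (snd x)))"
    unfolding UU1_def using wn' by (intro continuous_intros cW) auto
  have c3: "continuous_on ?S (\<lambda>x. UU2 (fst x) (fst (snd x)) (snd (snd x)))"
    unfolding UU2_def ph_def H_def Mf_def using wn nz
    by (intro continuous_intros cW cPf cPs ct) auto
  show ?thesis by (intro continuous_intros c1 c2 c3)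
qed

end

theorem mainTheorem9:
  shows "\<exists>(R :: real \<Rightarrow> real \<Rightarrow> real) (U :: real \<Rightarrow> real \<Rightarrow> real \<Rightarrow> real)
            (U1 :: real \<Rightarrow> real \<Rightarrow> real \<Rightarrow> real) (U2 :: real \<Rightarrow> real \<Rightarrow> real \<Rightarrow> real).
    (\<forall>\<alpha> u0. u0 > 0 \<longrightarrow>
        R \<alpha> u0 > 0 \<and> profile_solution \<alpha> u0 (R \<alpha> u0) (U \<alpha> u0) (U1 \<alpha> u0) (U2 \<alpha> u0)) \<and>
    (\<forall>\<alpha>0 v0. v0 > 0 \<longrightarrow>
       (\<exists>\<delta>>0. \<exists>\<rho>>0.
          (\<forall>\<alpha> u0. \<bar>\<alpha> - \<alpha>0\<bar> < \<delta> \<and> \<bar>u0 - v0\<bar> < \<delta> \<and> u0 > 0 \<longrightarrow> \<rho> \<le> R \<alpha> u0) \<and>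
          continuous_on ({\<alpha>0 - \<delta><..<\<alpha>0 + \<delta>} \<times> ({v0 - \<delta><..<v0 + \<delta>} \<inter> {0<..}) \<times> {0..\<rho>})
            (\<lambda>(\<alpha>, u0, r). (U \<alpha> u0 r, U1 \<alpha> u0 r, U2 \<alpha> u0 r))))"
proof -
  obtain P where P: "continuous_on UNIV P" "\<And>x. P x = Top P x" using fixpoint_exists by blast
  interpret fp P using P by unfold_locales auto
  have split: "(\<lambda>(\<alpha>, u0, r). (UU \<alpha> u0 r, UU1 \<alpha> u0 r, UU2 \<alpha> u0 r)) =
     (\<lambda>x. (UU (fst x) (fst (snd x)) (snd (snd x)), UU1 (fst x) (fst (snd x)) (snd (snd x)), UU2 (fst x) (fst (snd x)) (snd (snd x))))"
    by (auto simp: fun_eq_iff split_beta)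
  have part1: "u0 * Lf \<alpha> > 0 \<and> profile_solution \<alpha> u0 (u0 * Lf \<alpha>) (UU \<alpha> u0) (UU1 \<alpha> u0) (UU2 \<alpha> u0)"
    if u0: "u0 > 0" for \<alpha> u0
  proof -
    have c: "continuous_on {0..u0 * Lf \<alpha>} (UU2 \<alpha> u0)"
    proof -
      have "continuous_on {0..u0 * Lf \<alpha>} (\<lambda>r. (\<lambda>x. (UU (fst x) (fst (snd x)) (snd (snd x)), UU1 (fst x) (fst (snd x)) (snd (snd x)), UU2 (fst x) (fst (snd x)) (snd (snd x)))) (\<alpha>, u0, r))"
        by (rule continuous_on_compose2[OF cont_all]) (use u0 in \<open>auto intro!: continuous_intros\<close>)
      then have "continuous_on {0..u0 * Lf \<alpha>} (\<lambda>r. snd (snd ((\<lambda>x. (UU (fst x) (fst (snd x)) (snd (snd x)), UU1 (fst x) (fst (snd x)) (snd (snd x)), UU2 (fst x) (fst (snd x)) (snd (snd x)))) (\<alpha>, u0, r))))"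
        by (rule continuous_on_snd[OF continuous_on_snd])
      then show ?thesis by simp
    qed
    show ?thesis
      unfolding profile_solution_def is_C2_on_def
      using u0 Lf_pos[of \<alpha>] UU_deriv[OF u0] UU1_deriv[OF u0] c ODE[OF u0] UU0 UU1_0 by auto
  qed
  have part2: "\<exists>\<delta>>0. \<exists>\<rho>>0.
          (\<forall>\<alpha> u0. \<bar>\<alpha> - \<alpha>0\<bar> < \<delta> \<and> \<bar>u0 - v0\<bar> < \<delta> \<and> u0 > 0 \<longrightarrow> \<rho> \<le> u0 * Lf \<alpha>) \<and>
          continuous_on ({\<alpha>0 - \<delta><..<\<alpha>0 + \<delta>} \<times> ({v0 - \<delta><..<v0 + \<delta>} \<inter> {0<..}) \<times> {0..\<rho>})
            (\<lambda>(\<alpha>, u0, r). (UU \<alpha> u0 r, UU1 \<alpha> u0 r, UU2 \<alpha> u0 r))"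
    if v0: "v0 > 0" for \<alpha>0 v0
  proof (intro exI conjI allI impI)
    define \<delta> where "\<delta> = min 1 (v0/2)"
    define \<rho> where "\<rho> = v0/2 * (cc / (2 + \<bar>\<alpha>0\<bar>))"
    show "\<delta> > 0" unfolding \<delta>_def using v0 by auto
    show "\<rho> > 0" unfolding \<rho>_def using v0 by (auto simp: cc_def intro!: divide_pos_pos add_pos_nonneg)
    show "continuous_on ({\<alpha>0 - \<delta><..<\<alpha>0 + \<delta>} \<times> ({v0 - \<delta><..<v0 + \<delta>} \<inter> {0<..}) \<times> {0..\<rho>})
            (\<lambda>(\<alpha>, u0, r). (UU \<alpha> u0 r, UU1 \<alpha> u0 r, UU2 \<alpha> u0 r))"
      unfolding split by (rule continuous_on_subset[OF cont_all]) auto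
    fix \<alpha> u0 assume h: "\<bar>\<alpha> - \<alpha>0\<bar> < \<delta> \<and> \<bar>u0 - v0\<bar> < \<delta> \<and> u0 > 0"
    have "\<bar>u0 - v0\<bar> < v0/2" using h unfolding \<delta>_def by simp
    then have u: "v0/2 \<le> u0" by arith
    have a: "1 + \<bar>\<alpha>\<bar> \<le> 2 + \<bar>\<alpha>0\<bar>" using h unfolding \<delta>_def by auto
    have l: "cc / (2 + \<bar>\<alpha>0\<bar>) \<le> Lf \<alpha>" unfolding Lf_def using a
      by (intro divide_left_mono) (auto simp: cc_def intro!: mult_pos_pos add_pos_nonneg)
    show "\<rho> \<le> u0 * Lf \<alpha>" unfolding \<rho>_def using u l v0
      by (intro mult_mono) (auto simp: cc_def intro!: divide_nonneg_pos add_pos_nonneg)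
  qed
  show ?thesis
    apply (rule exI[of _ "\<lambda>\<alpha> u0. u0 * Lf \<alpha>"], rule exI[of _ UU], rule exI[of _ UU1], rule exI[of _ UU2])
    using part1 part2 by auto
qed


end
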